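(* Let $L\ge1$ and $\Gamma^0\in\{0,1\}^L$ (coordinates indexed by $\mathbb{Z}/L\mathbb{Z}$, viewed as a cycle). Color the positions so that each maximal cyclic interval (run) of equal values in $\Gamma^0$ receives its own distinct color, and run the following colored copying process $\tilde\Gamma^i$: given $\tilde\Gamma^i$, choose a permutation $\sigma$ of $\{0,\dots,L-1\}$ uniformly at random (independently of the past), set $\Delta_0=\tilde\Gamma^i$, and for $1\le j\le L$ let $\Delta_j$ be obtained from $\Delta_{j-1}$ by giving position $\sigma(j-1)$ the current color of position $(\sigma(j-1)+1)\bmod L$ (all other positions unchanged); set $\tilde\Gamma^{i+1}=\Delta_L$. Fix one interval (color) and let $X_i$ be its length, i.e. the number of positions having that color in $\tilde\Gamma^i$. Let $T$ be the first time at which $X_i$ equals $0$ or $L$. Then for every integer $a\ge1$, $\Pr[T\ge 4aL^2]\le 2^{-a}$. *)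

theory Defs
  imports "HOL-Probability.Probability" "HOL-Combinatorics.Permutations"
begin

text \<open>Positions are 0..L-1, viewed cyclically. A colouring is a function nat => nat
  (only the values at positions below L matter).\<close>

text \<open>p and q (both below L) lie in the same maximal cyclic run of equal values of G:
  the forward cyclic interval from p to q, or the one from q to p, is constant.\<close>
definition same_run :: "nat \<Rightarrow> (nat \<Rightarrow> bool) \<Rightarrow> nat \<Rightarrow> nat \<Rightarrow> bool" where
  "same_run L G p q \<longleftrightarrow>
     (\<exists>k<L. (p + k) mod L = q \<and> (\<forall>j\<le>k. G ((p + j) mod L) = G p)) \<or>
     (\<exists>k<L. (q + k) mod L = p \<and> (\<forall>j\<le>k. G ((q + j) mod L) = G q))"

definition run_colouring :: "nat \<Rightarrow> (nat \<Rightarrow> bool) \<Rightarrow> (nat \<Rightarrow> nat) \<Rightarrow> bool" where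
  "run_colouring L G c \<longleftrightarrow> (\<forall>p<L. \<forall>q<L. c p = c q \<longleftrightarrow> same_run L G p q)"

definition copy_sweep :: "nat \<Rightarrow> (nat \<Rightarrow> nat) \<Rightarrow> (nat \<Rightarrow> nat) \<Rightarrow> (nat \<Rightarrow> nat)" where
  "copy_sweep L \<sigma> c = foldl (\<lambda>d j. d(\<sigma> j := d ((\<sigma> j + 1) mod L))) c [0..<L]"

definition copy_step :: "nat \<Rightarrow> (nat \<Rightarrow> nat) \<Rightarrow> (nat \<Rightarrow> nat) pmf" where
  "copy_step L c = map_pmf (\<lambda>\<sigma>. copy_sweep L \<sigma> c) (pmf_of_set {\<sigma>. \<sigma> permutes {..<L}})"

text \<open>Distribution of the trajectory [state_0, ..., state_n] (a list of length n+1).\<close>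
fun copy_traj :: "nat \<Rightarrow> (nat \<Rightarrow> nat) \<Rightarrow> nat \<Rightarrow> (nat \<Rightarrow> nat) list pmf" where
  "copy_traj L c0 0 = return_pmf [c0]"
| "copy_traj L c0 (Suc n) =
     bind_pmf (copy_traj L c0 n) (\<lambda>xs. map_pmf (\<lambda>d. xs @ [d]) (copy_step L (last xs)))"

definition colour_len :: "nat \<Rightarrow> nat \<Rightarrow> (nat \<Rightarrow> nat) \<Rightarrow> nat" where
  "colour_len L k c = card {p. p < L \<and> c p = k}"

end

theory Submission
  imports Defs
begin

lemma prob_bind_pmf:
  "measure_pmf.prob (bind_pmf M f) A = measure_pmf.expectation M (\<lambda>x. measure_pmf.prob (f x) A)"
proof -
  have "ennreal (measure_pmf.prob (bind_pmf M f) A) = emeasure (measure_pmf (bind_pmf M f)) A"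
    by (simp add: measure_pmf.emeasure_eq_measure)
  also have "\<dots> = (\<integral>\<^sup>+x. emeasure (f x) A \<partial>M)" by simp
  also have "\<dots> = (\<integral>\<^sup>+x. ennreal (measure_pmf.prob (f x) A) \<partial>M)"
    by (simp add: measure_pmf.emeasure_eq_measure)
  also have "\<dots> = ennreal (measure_pmf.expectation M (\<lambda>x. measure_pmf.prob (f x) A))"
    by (intro nn_integral_eq_integral measure_pmf.integrable_const_bound[where B=1]) auto
  finally show ?thesis by (simp add: ennreal_inj measure_nonneg integral_nonneg_AE)
qed

lemma copy_traj_nonempty: "xs \<in> set_pmf (copy_traj L c n) \<Longrightarrow> xs \<noteq> []"
  by (induction n arbitrary: xs) auto

lemma copy_traj_unroll:
  "copy_traj L c0 (Suc n) = bind_pmf (copy_step L c0) (\<lambda>c1. map_pmf (\<lambda>xs. c0 # xs) (copy_traj L c1 n))"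
proof (induction n)
  case 0
  then show ?case by (simp add: bind_return_pmf map_pmf_def)
next
  case (Suc n)
  have "copy_traj L c0 (Suc (Suc n)) =
     bind_pmf (copy_traj L c0 (Suc n)) (\<lambda>xs. map_pmf (\<lambda>d. xs @ [d]) (copy_step L (last xs)))"
    by simp
  also have "\<dots> = bind_pmf (copy_step L c0) (\<lambda>c1. bind_pmf (copy_traj L c1 n)
        (\<lambda>ys. map_pmf (\<lambda>d. (c0 # ys) @ [d]) (copy_step L (last (c0 # ys)))))"
    by (subst Suc) (simp only: bind_assoc_pmf bind_map_pmf last.simps list.simps append_Cons map_pmf_def bind_return_pmf)
  also have "\<dots> = bind_pmf (copy_step L c0) (\<lambda>c1. bind_pmf (copy_traj L c1 n)
        (\<lambda>ys. map_pmf (\<lambda>d. c0 # (ys @ [d])) (copy_step L (last ys))))"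
    by (intro bind_pmf_cong refl) (auto dest: copy_traj_nonempty)
  also have "\<dots> = bind_pmf (copy_step L c0) (\<lambda>c1. map_pmf (\<lambda>xs. c0 # xs) (copy_traj L c1 (Suc n)))"
    by (simp add: map_bind_pmf map_pmf_comp o_def)
  finally show ?case .
qed


definition perms :: "nat \<Rightarrow> (nat \<Rightarrow> nat) set" where
  "perms L = {\<sigma>. \<sigma> permutes {..<L}}"

lemma perms_finite: "finite (perms L)" and perms_ne: "perms L \<noteq> {}"
  and perms_card: "card (perms L) = fact L"
  unfolding perms_def
  by (auto intro: finite_permutations card_permutations permutes_id)

definition Pr :: "nat \<Rightarrow> nat \<Rightarrow> nat \<Rightarrow> (nat \<Rightarrow> nat) \<Rightarrow> real" where
  "Pr L k n c = measure_pmf.prob (copy_traj L c n) {xs. \<forall>i<n. colour_len L k (xs ! i) \<notin> {0, L}}"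

lemma expect_copy_step:
  fixes f :: "(nat \<Rightarrow> nat) \<Rightarrow> real"
  shows
  "measure_pmf.expectation (copy_step L c) f = (\<Sum>\<sigma>\<in>perms L. f (copy_sweep L \<sigma> c)) / fact L"
proof -
  have "measure_pmf.expectation (copy_step L c) f = measure_pmf.expectation (pmf_of_set (perms L)) (\<lambda>\<sigma>. f (copy_sweep L \<sigma> c))"
    unfolding copy_step_def perms_def by simp
  also have "\<dots> = (\<Sum>\<sigma>\<in>perms L. f (copy_sweep L \<sigma> c)) / card (perms L)"
    by (rule integral_pmf_of_set[OF perms_ne perms_finite])
  finally show ?thesis by (simp add: perms_card)
qed

lemma Pr_0: "Pr L k 0 c = 1"
  by (simp add: Pr_def)

lemma Pr_Suc:
  "Pr L k (Suc n) c = (if colour_len L k c \<in> {0, L} then 0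
      else (\<Sum>\<sigma>\<in>perms L. Pr L k n (copy_sweep L \<sigma> c)) / fact L)"
proof -
  let ?E = "\<lambda>n. {xs. \<forall>i<n. colour_len L k (xs ! i) \<notin> {0, L}}"
  have pre: "(\<lambda>xs. c # xs) -` ?E (Suc n) = (if colour_len L k c \<in> {0, L} then {} else ?E n)"
  proof (cases "colour_len L k c \<in> {0, L}")
    case True
    then show ?thesis by force
  next
    case False
    have "(\<forall>i<Suc n. colour_len L k ((c # xs) ! i) \<notin> {0, L}) \<longleftrightarrow> (\<forall>i<n. colour_len L k (xs ! i) \<notin> {0, L})" for xs
      using False by (auto simp: less_Suc_eq_0_disj)
    then show ?thesis using False by auto
  qed
  have "Pr L k (Suc n) c = measure_pmf.expectation (copy_step L c)
          (\<lambda>c1. measure_pmf.prob (copy_traj L c1 n) ((\<lambda>xs. c # xs) -` ?E (Suc n)))"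
    unfolding Pr_def copy_traj_unroll prob_bind_pmf by simp
  also have "\<dots> = (if colour_len L k c \<in> {0, L} then 0
      else (\<Sum>\<sigma>\<in>perms L. Pr L k n (copy_sweep L \<sigma> c)) / fact L)"
    unfolding pre by (simp add: expect_copy_step Pr_def)
  finally show ?thesis .
qed

lemma Pr_nonneg: "0 \<le> Pr L k n c" by (simp add: Pr_def)
lemma Pr_le1: "Pr L k n c \<le> 1" by (simp add: Pr_def)

lemma Pr_mono: "Pr L k (Suc n) c \<le> Pr L k n c"
proof (induction n arbitrary: c)
  case 0
  then show ?case using Pr_le1[of L k 1 c] by (simp add: Pr_0)
next
  case (Suc n)
  show ?case
  proof (cases "colour_len L k c \<in> {0, L}")
    case True
    then show ?thesis by (subst (1 2) Pr_Suc) simp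
  next
    case False
    have "(\<Sum>\<sigma>\<in>perms L. Pr L k (Suc n) (copy_sweep L \<sigma> c)) \<le> (\<Sum>\<sigma>\<in>perms L. Pr L k n (copy_sweep L \<sigma> c))"
      by (intro sum_mono Suc)
    then show ?thesis using False by (subst (1 2) Pr_Suc) (simp add: divide_right_mono)
  qed
qed

lemma Pr_antimono: "m \<le> n \<Longrightarrow> Pr L k n c \<le> Pr L k m c"
  by (induction n rule: dec_induct) (auto intro: order_trans[OF Pr_mono])


definition stepf :: "nat \<Rightarrow> (nat \<Rightarrow> nat) \<Rightarrow> (nat \<Rightarrow> nat) \<Rightarrow> nat \<Rightarrow> (nat \<Rightarrow> nat)" where
  "stepf L \<sigma> = (\<lambda>d j. d(\<sigma> j := d ((\<sigma> j + 1) mod L)))"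

lemma copy_sweep_stepf: "copy_sweep L \<sigma> c = foldl (stepf L \<sigma>) c [0..<L]"
  unfolding copy_sweep_def stepf_def ..

lemma foldl_select: "foldl (stepf L \<sigma>) (c \<circ> d) xs = c \<circ> foldl (stepf L \<sigma>) d xs"
proof (induction xs arbitrary: d)
  case Nil then show ?case by simp
next
  case (Cons x xs)
  have "stepf L \<sigma> (c \<circ> d) x = c \<circ> stepf L \<sigma> d x"
    by (simp add: stepf_def fun_eq_iff)
  then show ?case by (simp only: foldl_Cons Cons.IH)
qed

definition piv :: "nat \<Rightarrow> (nat \<Rightarrow> nat) \<Rightarrow> nat \<Rightarrow> nat" where
  "piv L \<sigma> = copy_sweep L \<sigma> id"

lemma select: "copy_sweep L \<sigma> c p = c (piv L \<sigma> p)"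
  using foldl_select[of L \<sigma> c id "[0..<L]"] unfolding piv_def copy_sweep_stepf by simp

lemma foldl_lt: "(\<forall>q<L. d q < L) \<Longrightarrow> \<sigma> permutes {..<L} \<Longrightarrow> set xs \<subseteq> {..<L} \<Longrightarrow> p < L \<Longrightarrow> foldl (stepf L \<sigma>) d xs p < L"
proof (induction xs arbitrary: d)
  case Nil then show ?case by simp
next
  case (Cons x xs)
  have "\<forall>q<L. stepf L \<sigma> d x q < L" using Cons.prems(1,4) by (auto simp: stepf_def)
  then show ?case using Cons by simp
qed

lemma piv_lt: "\<sigma> permutes {..<L} \<Longrightarrow> p < L \<Longrightarrow> piv L \<sigma> p < L"
  unfolding piv_def copy_sweep_stepf by (rule foldl_lt) auto

definition rot :: "nat \<Rightarrow> nat \<Rightarrow> nat \<Rightarrow> nat" where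
  "rot L m p = (p + m) mod L"

definition rho :: "nat \<Rightarrow> nat \<Rightarrow> nat \<Rightarrow> nat" where
  "rho L m q = (if q < L then (q + L - m) mod L else q)"

lemma rot_inj: "(a + q) mod L = (b + q) mod (L::nat) \<Longrightarrow> a < L \<Longrightarrow> b < L \<Longrightarrow> a = b"
proof -
  assume h: "(a + q) mod L = (b + q) mod (L::nat)" "a < L" "b < L"
  obtain q1 q2 where "a + q + L * q1 = b + q + L * q2" using h(1) nat_mod_eq_iff by blast
  then have "a + L * q1 = b + L * q2" by simp
  then have "(a + L * q1) mod L = (b + L * q2) mod L" by simp
  then show "a = b" using h(2,3) by simp
qed

lemma rot_rho: "m \<le> L \<Longrightarrow> q < L \<Longrightarrow> rot L m (rho L m q) = q"
  unfolding rot_def rho_def by (simp add: mod_add_left_eq)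

lemma rot_next: "rot L m ((x + 1) mod L) = (rot L m x + 1) mod L"
proof -
  have "((x + 1) mod L + m) mod L = (x + 1 + m) mod L" by (rule mod_add_left_eq)
  moreover have "((x + m) mod L + 1) mod L = (x + m + 1) mod L" by (rule mod_add_left_eq)
  ultimately show ?thesis unfolding rot_def by (simp add: add_ac)
qed

lemma rot_lt: "0 < L \<Longrightarrow> rot L m p < L" unfolding rot_def by simp

lemma rho_permutes: assumes "m \<le> L" shows "rho L m permutes {..<L}"
proof (rule bij_imp_permutes)
  have inj: "inj_on (rho L m) {..<L}"
  proof (rule inj_onI)
    fix x y assume x: "x \<in> {..<L}" and y: "y \<in> {..<L}" and e: "rho L m x = rho L m y"
    have "x = rot L m (rho L m x)" using rot_rho[OF assms, of x] x by simp
    also have "\<dots> = rot L m (rho L m y)" using e by simp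
    also have "\<dots> = y" using rot_rho[OF assms, of y] y by simp
    finally show "x = y" .
  qed
  have sub: "rho L m ` {..<L} \<subseteq> {..<L}"
  proof
    fix z assume "z \<in> rho L m ` {..<L}"
    then obtain x where "x < L" "z = rho L m x" by auto
    then show "z \<in> {..<L}" by (simp add: rho_def)
  qed
  have "rho L m ` {..<L} = {..<L}" by (rule endo_inj_surj[OF finite_lessThan sub inj])
  then show "bij_betw (rho L m) {..<L} {..<L}" using inj by (simp add: bij_betw_def)
  show "x \<notin> {..<L} \<Longrightarrow> rho L m x = x" for x by (simp add: rho_def)
qed

lemma equiv_aux:
  assumes \<sigma>: "\<sigma> permutes {..<L}" and m: "m < L"
  shows "n \<le> L \<Longrightarrow> \<forall>p<L. foldl (stepf L (rho L m \<circ> \<sigma>)) (c \<circ> rot L m) [0..<n] p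
            = foldl (stepf L \<sigma>) c [0..<n] (rot L m p)"
proof (induction n)
  case 0 then show ?case by simp
next
  case (Suc n)
  define d' where "d' = foldl (stepf L (rho L m \<circ> \<sigma>)) (c \<circ> rot L m) [0..<n]"
  define d where "d = foldl (stepf L \<sigma>) c [0..<n]"
  have IH: "\<forall>p<L. d' p = d (rot L m p)" unfolding d'_def d_def by (rule Suc.IH) (use Suc.prems in simp)
  define q where "q = \<sigma> n"
  have qL: "q < L" using permutes_in_image[OF \<sigma>, of n] Suc.prems unfolding q_def by auto
  define q' where "q' = rho L m q"
  have q'L: "q' < L" using qL m by (simp add: q'_def rho_def)
  have rq: "rot L m q' = q" using rot_rho[of m L q] m qL unfolding q'_def by simp
  show ?case
  proof (intro allI impI)
    fix p assume pL: "p < L"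
    have "foldl (stepf L (rho L m \<circ> \<sigma>)) (c \<circ> rot L m) [0..<Suc n] p = (d'(q' := d' ((q' + 1) mod L))) p"
      by (simp add: d'_def stepf_def q'_def q_def)
    moreover have "foldl (stepf L \<sigma>) c [0..<Suc n] (rot L m p) = (d(q := d ((q + 1) mod L))) (rot L m p)"
      by (simp add: d_def stepf_def q_def)
    moreover have "(d'(q' := d' ((q' + 1) mod L))) p = (d(q := d ((q + 1) mod L))) (rot L m p)"
    proof (cases "p = q'")
      case True
      then show ?thesis using IH pL m rq rot_next[of L m q'] by simp
    next
      case False
      then have "rot L m p \<noteq> q" using rq rot_inj[of p m L q'] pL q'L unfolding rot_def by auto
      then show ?thesis using False IH pL by simp
    qed
    ultimately show "foldl (stepf L (rho L m \<circ> \<sigma>)) (c \<circ> rot L m) [0..<Suc n] p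
            = foldl (stepf L \<sigma>) c [0..<Suc n] (rot L m p)" by simp
  qed
qed

lemma equiv:
  assumes "\<sigma> permutes {..<L}" "m < L" "p < L"
  shows "copy_sweep L (rho L m \<circ> \<sigma>) (c \<circ> rot L m) p = copy_sweep L \<sigma> c (rot L m p)"
  using equiv_aux[OF assms(1,2), of L c] assms(3) unfolding copy_sweep_stepf by simp


lemma reindex_perms:
  assumes "\<rho> permutes {..<L}"
  shows "(\<Sum>\<sigma>\<in>perms L. g (\<rho> \<circ> \<sigma>)) = (\<Sum>\<sigma>\<in>perms L. (g \<sigma> :: 'a::comm_monoid_add))"
proof (rule sum.reindex_bij_witness[where j = "\<lambda>\<sigma>. \<rho> \<circ> \<sigma>" and i = "\<lambda>\<tau>. inv \<rho> \<circ> \<tau>"])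
  show "inv \<rho> \<circ> (\<rho> \<circ> a) = a" for a
    using permutes_inv_o(2)[OF assms] by (simp add: o_assoc)
  show "\<rho> \<circ> (inv \<rho> \<circ> b) = b" for b
    using permutes_inv_o(1)[OF assms] by (simp add: o_assoc)
  show "\<rho> \<circ> a \<in> perms L" if "a \<in> perms L" for a
    using that assms by (simp add: perms_def permutes_compose)
  show "inv \<rho> \<circ> b \<in> perms L" if "b \<in> perms L" for b
    using that permutes_inv[OF assms] by (simp add: perms_def permutes_compose)
qed simp

lemma rho_rot: "q \<le> L \<Longrightarrow> p < L \<Longrightarrow> rho L q (rot L q p) = p"
proof -
  assume h: "q \<le> L" "p < L"
  then have "L > 0" by simp
  have "rho L q (rot L q p) = ((p + q) mod L + (L - q)) mod L"
    using \<open>L > 0\<close> h by (simp add: rho_def rot_def)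
  also have "\<dots> = (p + q + (L - q)) mod L" by (rule mod_add_left_eq)
  also have "p + q + (L - q) = p + L" using h by simp
  finally show ?thesis using h by simp
qed

lemma sum_rot: "(\<Sum>p<L. f (rot L q p)) = (\<Sum>p<L. (f p :: 'a::comm_monoid_add))"
proof -
  have r: "rot L q p = rot L (q mod L) p" for p unfolding rot_def by (simp add: mod_add_right_eq)
  show ?thesis unfolding r
  proof (rule sum.reindex_bij_witness[where j = "rot L (q mod L)" and i = "rho L (q mod L)"])
    fix a assume "a \<in> {..<L}"
    then show "rho L (q mod L) (rot L (q mod L) a) = a" by (intro rho_rot) auto
    show "rot L (q mod L) a \<in> {..<L}" using \<open>a \<in> {..<L}\<close> by (simp add: rot_def)
  next
    fix b assume "b \<in> {..<L}"
    then show "rot L (q mod L) (rho L (q mod L) b) = b" by (intro rot_rho) auto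
    show "rho L (q mod L) b \<in> {..<L}" using \<open>b \<in> {..<L}\<close> by (simp add: rho_def)
  qed simp
qed

lemma card_filter_sum: "finite A \<Longrightarrow> card {x\<in>A. P x} = (\<Sum>x\<in>A. if P x then 1 else 0 :: nat)"
proof -
  assume fin: "finite A"
  have "card {x\<in>A. P x} = (\<Sum>x\<in>{x\<in>A. P x}. 1 :: nat)" by simp
  also have "\<dots> = (\<Sum>x\<in>A. if P x then 1 else 0 :: nat)" by (rule sum.inter_filter[OF fin])
  finally show ?thesis .
qed

lemma card_sum: "card {p. p < (L::nat) \<and> Q p} = (\<Sum>p<L. if Q p then 1 else 0 :: nat)"
proof -
  have e: "{p. p < L \<and> Q p} = {p\<in>{..<L}. Q p}" by auto
  have "card {p\<in>{..<L}. Q p} = (\<Sum>p<L. if Q p then 1 else 0 :: nat)" by (rule card_filter_sum) simp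
  then show ?thesis unfolding e .
qed

lemma S2nat: "(\<Sum>\<sigma>\<in>perms L. colour_len L k (copy_sweep L \<sigma> c)) = fact L * colour_len L k c"
proof -
  let ?I = "\<lambda>b. if b then 1 else 0 :: nat"
  have "(\<Sum>\<sigma>\<in>perms L. colour_len L k (copy_sweep L \<sigma> c))
      = (\<Sum>\<sigma>\<in>perms L. \<Sum>p<L. ?I (c (piv L \<sigma> p) = k))"
    unfolding colour_len_def card_sum select ..
  also have "\<dots> = (\<Sum>p<L. \<Sum>\<sigma>\<in>perms L. ?I (c (piv L \<sigma> p) = k))"
    by (rule sum.swap)
  also have "\<dots> = (\<Sum>p<L. \<Sum>\<sigma>\<in>perms L. ?I (c (rot L p (piv L \<sigma> 0)) = k))"
  proof (rule sum.cong[OF refl])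
    fix p assume "p \<in> {..<L}"
    then have pL: "p < L" by simp
    have "(\<Sum>\<sigma>\<in>perms L. ?I (c (piv L \<sigma> p) = k)) = (\<Sum>\<sigma>\<in>perms L. ?I (c (rot L p (piv L (rho L p \<circ> \<sigma>) 0)) = k))"
    proof (rule sum.cong[OF refl])
      fix \<sigma> assume "\<sigma> \<in> perms L"
      then have s: "\<sigma> permutes {..<L}" by (simp add: perms_def)
      have "copy_sweep L (rho L p \<circ> \<sigma>) (c \<circ> rot L p) 0 = copy_sweep L \<sigma> c (rot L p 0)"
        by (rule equiv[OF s pL]) (use pL in simp)
      then have "c (rot L p (piv L (rho L p \<circ> \<sigma>) 0)) = c (piv L \<sigma> p)"
        using pL by (simp add: select rot_def)
      then show "?I (c (piv L \<sigma> p) = k) = ?I (c (rot L p (piv L (rho L p \<circ> \<sigma>) 0)) = k)" by simp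
    qed
    also have "\<dots> = (\<Sum>\<sigma>\<in>perms L. ?I (c (rot L p (piv L \<sigma> 0)) = k))"
      by (rule reindex_perms[OF rho_permutes, of p L "\<lambda>\<tau>. ?I (c (rot L p (piv L \<tau> 0)) = k)"]) (use pL in simp)
    finally show "(\<Sum>\<sigma>\<in>perms L. ?I (c (piv L \<sigma> p) = k)) = (\<Sum>\<sigma>\<in>perms L. ?I (c (rot L p (piv L \<sigma> 0)) = k))" .
  qed
  also have "\<dots> = (\<Sum>\<sigma>\<in>perms L. \<Sum>p<L. ?I (c (rot L p (piv L \<sigma> 0)) = k))"
    by (rule sum.swap)
  also have "\<dots> = (\<Sum>\<sigma>\<in>perms L. colour_len L k c)"
  proof (rule sum.cong[OF refl])
    fix \<sigma> assume "\<sigma> \<in> perms L"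
    have "rot L p (piv L \<sigma> 0) = rot L (piv L \<sigma> 0) p" for p by (simp add: rot_def add.commute)
    then show "(\<Sum>p<L. ?I (c (rot L p (piv L \<sigma> 0)) = k)) = colour_len L k c"
      unfolding colour_len_def card_sum using sum_rot[of "\<lambda>q. ?I (c q = k)" L "piv L \<sigma> 0"] by simp
  qed
  also have "\<dots> = fact L * colour_len L k c" by (simp add: perms_card)
  finally show ?thesis .
qed


locale frame =
  fixes L :: nat and \<sigma> :: "nat \<Rightarrow> nat"
  assumes L2: "2 \<le> L" and perm: "\<sigma> permutes {..<L}"
begin

abbreviation t where "t \<equiv> inv \<sigma>"
abbreviation nx where "nx p \<equiv> (p + 1) mod L"

lemma t_lt: "p < L \<Longrightarrow> t p < L"
  using permutes_in_image[OF permutes_inv[OF perm]] by simp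

lemma t_sigma: "t (\<sigma> j) = j" and sigma_t: "\<sigma> (t p) = p"
  using permutes_inverses[OF perm] by auto

lemma t_inj: "t p = t q \<Longrightarrow> p = q"
  by (metis sigma_t)

lemma nx_lt: "nx p < L" using L2 by simp

lemma nx_neq: "p < L \<Longrightarrow> nx p \<noteq> p"
  using L2 by (cases "p + 1 < L") (auto simp: mod_if)

lemma sigma_lt: "j < L \<Longrightarrow> \<sigma> j < L"
  using permutes_in_image[OF perm] by simp

lemma inv_step:
  "m \<le> L \<Longrightarrow> \<forall>p<L. foldl (stepf L \<sigma>) c [0..<m] p =
     (if t p < m then (if t (nx p) < t p then foldl (stepf L \<sigma>) c [0..<m] (nx p) else c (nx p)) else c p)"
proof (induction m)
  case 0 then show ?case by simp
next
  case (Suc m)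
  define d where "d = foldl (stepf L \<sigma>) c [0..<m]"
  have IH: "\<forall>p<L. d p = (if t p < m then (if t (nx p) < t p then d (nx p) else c (nx p)) else c p)"
    unfolding d_def by (rule Suc.IH) (use Suc.prems in simp)
  define q where "q = \<sigma> m"
  have qL: "q < L" using sigma_lt Suc.prems unfolding q_def by simp
  have tq: "t q = m" unfolding q_def by (rule t_sigma)
  have new: "foldl (stepf L \<sigma>) c [0..<Suc m] = d(q := d (nx q))"
    by (simp add: d_def stepf_def q_def)
  show ?case unfolding new
  proof (intro allI impI)
    fix p assume pL: "p < L"
    show "(d(q := d (nx q))) p = (if t p < Suc m then (if t (nx p) < t p then (d(q := d (nx q))) (nx p) else c (nx p)) else c p)"
    proof (cases "p = q")
      case True
      have nq: "nx q \<noteq> q" using nx_neq qL by simp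
      have tn: "t (nx q) \<noteq> m" using tq nq t_inj by metis
      have nxL: "nx q < L" by (rule nx_lt)
      have L1: "(d(q := d (nx q))) p = d (nx q)" using True by simp
      have L2: "(d(q := d (nx q))) (nx q) = d (nx q)" using nq by simp
      show ?thesis
      proof (cases "t (nx q) < m")
        case True
        then show ?thesis using L1 L2 tq \<open>p = q\<close> by simp
      next
        case False
        then have "d (nx q) = c (nx q)" using IH nxL by simp
        moreover have "\<not> t (nx q) < t q" using False tq by simp
        ultimately show ?thesis using L1 tq \<open>p = q\<close> by simp
      qed
    next
      case False
      have tp: "t p \<noteq> m" using tq False t_inj by metis
      have L1: "(d(q := d (nx q))) p = d p" using False by simp
      show ?thesis
      proof (cases "t p < m")
        case True
        have e: "(if t (nx p) < t p then (d(q := d (nx q))) (nx p) else c (nx p))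
               = (if t (nx p) < t p then d (nx p) else c (nx p))"
        proof (cases "nx p = q")
          case True
          then have "\<not> t (nx p) < t p" using tq \<open>t p < m\<close> by simp
          then show ?thesis by simp
        next
          case False
          then show ?thesis by simp
        qed
        have "d p = (if t (nx p) < t p then d (nx p) else c (nx p))" using IH pL True by simp
        then show ?thesis using L1 e True by simp
      next
        case False
        then have "\<not> t p < Suc m" using tp by simp
        moreover have "d p = c p" using IH pL False by simp
        ultimately show ?thesis using L1 by simp
      qed
    qed
  qed
qed

abbreviation piv' where "piv' \<equiv> piv L \<sigma>"

definition asc where "asc p \<longleftrightarrow> t p < t (nx p)"

lemma PI: "p < L \<Longrightarrow> piv' p = (if asc p then nx p else piv' (nx p))"
proof -
  assume pL: "p < L"
  have "piv' p = (if t p < L then (if t (nx p) < t p then piv' (nx p) else id (nx p)) else id p)"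
    using inv_step[of L id] pL unfolding piv_def copy_sweep_stepf by simp
  moreover have "t (nx p) \<noteq> t p" using nx_neq[OF pL] t_inj by metis
  ultimately show ?thesis using t_lt[OF pL] unfolding asc_def by auto
qed

lemma no_asc_same: "q < L \<Longrightarrow> p \<le> q \<Longrightarrow> (\<forall>r. p \<le> r \<and> r < q \<longrightarrow> \<not> asc r) \<Longrightarrow> piv' p = piv' q"
proof (induction "q - p" arbitrary: p)
  case 0 then show ?case by simp
next
  case (Suc n)
  then have "p < q" by simp
  then have "nx p = p + 1" using Suc.prems by simp
  moreover have "\<not> asc p" using Suc.prems \<open>p < q\<close> by simp
  ultimately have "piv' p = piv' (p + 1)" using PI[of p] Suc.prems by simp
  also have "\<dots> = piv' q" using Suc.hyps(1)[of "p+1"] Suc.hyps(2) Suc.prems \<open>p < q\<close> by simp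
  finally show ?case .
qed

lemma asc_exists: "\<exists>d<L. asc d"
proof (rule ccontr)
  assume "\<not> (\<exists>d<L. asc d)"
  then have na: "\<And>d. d < L \<Longrightarrow> t (nx d) < t d"
    unfolding asc_def using nx_neq t_inj by (metis linorder_neqE_nat)
  have tp: "p < L \<Longrightarrow> t p + p \<le> t 0" for p
  proof (induction p)
    case 0 then show ?case by simp
  next
    case (Suc p)
    then have "t (Suc p) < t p" using na[of p] by simp
    then show ?case using Suc by simp
  qed
  have "L - 1 < L" using L2 by simp
  note tp[OF this]
  moreover have "t 0 < t (L - 1)" using na[of "L - 1"] L2 by simp
  ultimately show False using L2 by simp
qed

lemma first_asc:
  assumes "p \<le> d0" "d0 < L" "asc d0"
  obtains d where "p \<le> d" "d < L" "asc d" "\<forall>r. p \<le> r \<and> r < d \<longrightarrow> \<not> asc r"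
proof -
  define d where "d = (LEAST d. p \<le> d \<and> asc d)"
  have "p \<le> d \<and> asc d" unfolding d_def by (rule LeastI[of _ d0]) (use assms in simp)
  moreover have "d \<le> d0" unfolding d_def by (rule Least_le) (use assms in simp)
  moreover have "\<forall>r. p \<le> r \<and> r < d \<longrightarrow> \<not> asc r" unfolding d_def using not_less_Least by blast
  ultimately show ?thesis by (intro that[of d]) (use assms in auto)
qed

lemma piv_first: "p \<le> d \<Longrightarrow> d < L \<Longrightarrow> asc d \<Longrightarrow> \<forall>r. p \<le> r \<and> r < d \<longrightarrow> \<not> asc r \<Longrightarrow> piv' p = nx d"
  using no_asc_same[of d p] PI[of d] by simp

lemma piv_wrap: "p < L \<Longrightarrow> \<forall>r. p \<le> r \<and> r < L \<longrightarrow> \<not> asc r \<Longrightarrow> piv' p = piv' 0"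
proof -
  assume h: "p < L" "\<forall>r. p \<le> r \<and> r < L \<longrightarrow> \<not> asc r"
  have "piv' p = piv' (L - 1)" by (rule no_asc_same) (use h L2 in auto)
  also have "\<dots> = piv' (nx (L - 1))" using PI[of "L - 1"] h L2 by simp
  also have "nx (L - 1) = 0" using L2 by simp
  finally show ?thesis .
qed

end


definition Kset :: "nat \<Rightarrow> nat \<Rightarrow> (nat \<Rightarrow> nat) \<Rightarrow> nat set" where
  "Kset L k c = {p. p < L \<and> c p = k}"

definition intv :: "nat \<Rightarrow> nat set \<Rightarrow> bool" where
  "intv L K \<longleftrightarrow> (\<exists>s n. n \<le> L \<and> K = (\<lambda>i. (s + i) mod L) ` {..<n})"

lemma intv_card: "n \<le> L \<Longrightarrow> card ((\<lambda>i. (s + i) mod L) ` {..<n}) = n"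
  by (subst card_image) (auto intro!: inj_onI dest: rot_inj[of _ s L] simp: add.commute)

context frame
begin

definition NN where "NN X = {p. p < L \<and> 1 \<le> piv' p \<and> piv' p \<le> X}"

lemma nx_in: "d < L \<Longrightarrow> X < L \<Longrightarrow> (1 \<le> nx d \<and> nx d \<le> X) \<longleftrightarrow> d < X"
  by (cases "d + 1 < L") (auto simp: mod_if)

lemma case_i:
  assumes X: "X < L" and na: "\<forall>d<X. \<not> asc d"
  shows "NN X = {}"
proof -
  have "\<not> (1 \<le> piv' p \<and> piv' p \<le> X)" if pL: "p < L" for p
  proof (cases "\<exists>d. p \<le> d \<and> d < L \<and> asc d")
    case True
    then obtain d0 where "p \<le> d0" "d0 < L" "asc d0" by blast
    then obtain d where d: "p \<le> d" "d < L" "asc d" "\<forall>r. p \<le> r \<and> r < d \<longrightarrow> \<not> asc r" by (rule first_asc)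
    then have "piv' p = nx d" by (intro piv_first)
    moreover have "\<not> d < X" using na d by auto
    ultimately show ?thesis using nx_in[OF d(2) X] by simp
  next
    case False
    then have "piv' p = piv' 0" using piv_wrap pL by blast
    obtain d0 where "d0 < L" "asc d0" using asc_exists by blast
    then obtain d where d: "0 \<le> d" "d < L" "asc d" "\<forall>r. 0 \<le> r \<and> r < d \<longrightarrow> \<not> asc r" using first_asc[of 0 d0] by blast
    then have "piv' 0 = nx d" by (intro piv_first)
    moreover have "\<not> d < X" using na d by auto
    ultimately show ?thesis using nx_in[OF d(2) X] \<open>piv' p = piv' 0\<close> by simp
  qed
  then show ?thesis unfolding NN_def by auto
qed

lemma case_ii:
  assumes X: "X < L" and na: "\<forall>d. X \<le> d \<and> d < L \<longrightarrow> \<not> asc d"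
  shows "NN X = {..<L}"
proof -
  have "1 \<le> piv' p \<and> piv' p \<le> X" if pL: "p < L" for p
  proof (cases "\<exists>d. p \<le> d \<and> d < L \<and> asc d")
    case True
    then obtain d0 where "p \<le> d0" "d0 < L" "asc d0" by blast
    then obtain d where d: "p \<le> d" "d < L" "asc d" "\<forall>r. p \<le> r \<and> r < d \<longrightarrow> \<not> asc r" by (rule first_asc)
    then have "piv' p = nx d" by (intro piv_first)
    moreover have "d < X" using na d by (meson not_le)
    ultimately show ?thesis using nx_in[OF d(2) X] by simp
  next
    case False
    then have "piv' p = piv' 0" using piv_wrap pL by blast
    obtain d0 where "d0 < L" "asc d0" using asc_exists by blast
    then obtain d where d: "0 \<le> d" "d < L" "asc d" "\<forall>r. 0 \<le> r \<and> r < d \<longrightarrow> \<not> asc r" using first_asc[of 0 d0] by blast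
    then have "piv' 0 = nx d" by (intro piv_first)
    moreover have "d < X" using na d by (meson not_le)
    ultimately show ?thesis using nx_in[OF d(2) X] \<open>piv' p = piv' 0\<close> by simp
  qed
  then show ?thesis unfolding NN_def by auto
qed

lemma case_iii:
  assumes X: "X < L" and a: "a < X" "asc a" "\<forall>d. a < d \<and> d < X \<longrightarrow> \<not> asc d"
    and m: "X \<le> dm" "dm < L" "asc dm" "\<forall>d. dm < d \<and> d < L \<longrightarrow> \<not> asc d"
  shows "NN X = {p. p < L \<and> (p \<le> a \<or> dm < p)}"
proof -
  have "(1 \<le> piv' p \<and> piv' p \<le> X) \<longleftrightarrow> (p \<le> a \<or> dm < p)" if pL: "p < L" for p
  proof (cases "p \<le> dm")
    case True
    then obtain d where d: "p \<le> d" "d < L" "asc d" "\<forall>r. p \<le> r \<and> r < d \<longrightarrow> \<not> asc r"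
      using first_asc[of p dm] m by blast
    then have "piv' p = nx d" by (intro piv_first)
    moreover have "d < X \<longleftrightarrow> p \<le> a"
    proof
      assume "d < X"
      then have "d \<le> a" using a(3) d(3) by (meson not_le)
      then show "p \<le> a" using d(1) by simp
    next
      assume "p \<le> a"
      then have "d \<le> a" using d(4) a(2) by (meson not_le)
      then show "d < X" using a(1) by simp
    qed
    ultimately show ?thesis using nx_in[OF d(2) X] True by auto
  next
    case False
    then have "\<forall>r. p \<le> r \<and> r < L \<longrightarrow> \<not> asc r" using m(4) by auto
    then have "piv' p = piv' 0" using piv_wrap pL by blast
    obtain d where d: "0 \<le> d" "d < L" "asc d" "\<forall>r. 0 \<le> r \<and> r < d \<longrightarrow> \<not> asc r"
      using first_asc[of 0 a] a X by auto
    then have "piv' 0 = nx d" by (intro piv_first)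
    moreover have "d \<le> a" using d(4) a(2) by (meson not_le zero_le)
    ultimately show ?thesis using nx_in[OF d(2) X] \<open>piv' p = piv' 0\<close> False a(1) by auto
  qed
  then show ?thesis unfolding NN_def by auto
qed

lemma set_iii:
  assumes "a < dm" "dm < L"
  shows "{p. p < L \<and> (p \<le> a \<or> dm < p)} = (\<lambda>i. (Suc dm + i) mod L) ` {..<L - dm + a}"
proof (intro set_eqI iffI)
  fix p assume "p \<in> {p. p < L \<and> (p \<le> a \<or> dm < p)}"
  then have p: "p < L" "p \<le> a \<or> dm < p" by auto
  show "p \<in> (\<lambda>i. (Suc dm + i) mod L) ` {..<L - dm + a}"
  proof (cases "p \<le> a")
    case True
    have "(Suc dm + (L - Suc dm + p)) mod L = p" using assms p by simp
    moreover have "L - Suc dm + p < L - dm + a" using assms True by simp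
    ultimately show ?thesis by (metis image_eqI lessThan_iff)
  next
    case False
    then have "dm < p" using p by simp
    have "(Suc dm + (p - Suc dm)) mod L = p" using \<open>dm < p\<close> p by simp
    moreover have "p - Suc dm < L - dm + a" using assms p \<open>dm < p\<close> by simp
    ultimately show ?thesis by (metis image_eqI lessThan_iff)
  qed
next
  fix p assume "p \<in> (\<lambda>i. (Suc dm + i) mod L) ` {..<L - dm + a}"
  then obtain i where i: "i < L - dm + a" "p = (Suc dm + i) mod L" by auto
  show "p \<in> {p. p < L \<and> (p \<le> a \<or> dm < p)}"
  proof (cases "Suc dm + i < L")
    case True
    then show ?thesis using i by simp
  next
    case False
    then have "p = Suc dm + i - L" using i assms by (simp add: mod_if le_mod_geq)
    moreover have "Suc dm + i - L \<le> a" using i(1) assms False by linarith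
    ultimately show ?thesis using assms by simp
  qed
qed

lemma frame_main:
  assumes X: "1 \<le> X" "X < L"
  shows "intv L (NN X)"
    and "(if X = 1 then \<not> asc 0 else if X = L - 1 then \<not> asc (L - 1) else \<not> asc (L - 1) \<and> asc (X - 1))
          \<Longrightarrow> card (NN X) \<noteq> X"
proof -
  have fin1: "finite {d. d < X \<and> asc d}" "finite {d. d < L \<and> asc d}" by auto
  let ?ev = "(if X = 1 then \<not> asc 0 else if X = L - 1 then \<not> asc (L - 1) else \<not> asc (L - 1) \<and> asc (X - 1))"
  consider (i) "\<forall>d<X. \<not> asc d" | (ii) "\<forall>d. X \<le> d \<and> d < L \<longrightarrow> \<not> asc d"
    | (iii) "\<exists>d<X. asc d" "\<exists>d. X \<le> d \<and> d < L \<and> asc d" by blast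
  then have "intv L (NN X) \<and> (?ev \<longrightarrow> card (NN X) \<noteq> X)"
  proof cases
    case i
    have e: "NN X = (\<lambda>i. (0 + i) mod L) ` {..<0}" using case_i[OF X(2) i] by simp
    have "intv L (NN X)" unfolding intv_def by (rule exI[of _ 0], rule exI[of _ 0]) (use e in simp)
    moreover have "card (NN X) = 0" using e by simp
    ultimately show ?thesis using X by simp
  next
    case ii
    have e0: "NN X = {..<L}" by (rule case_ii[OF X(2) ii])
    have e: "NN X = (\<lambda>i. (0 + i) mod L) ` {..<L}"
    proof -
      have "(\<lambda>i. (0 + i) mod L) ` {..<L} = (\<lambda>i. i) ` {..<L}" by (intro image_cong refl) simp
      then show ?thesis using e0 by simp
    qed
    have "intv L (NN X)" unfolding intv_def by (rule exI[of _ 0], rule exI[of _ L]) (use e in simp)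
    moreover have "card (NN X) = L" using e0 by simp
    ultimately show ?thesis using X by simp
  next
    case iii
    define a where "a = Max {d. d < X \<and> asc d}"
    define dm where "dm = Max {d. d < L \<and> asc d}"
    have "a \<in> {d. d < X \<and> asc d}" unfolding a_def using fin1(1) iii(1) by (intro Max_in) auto
    then have a1: "a < X" "asc a" by auto
    have a2: "\<forall>d. a < d \<and> d < X \<longrightarrow> \<not> asc d"
    proof (intro allI impI)
      fix d assume "a < d \<and> d < X"
      moreover have "asc d \<Longrightarrow> d \<le> a" using \<open>a < d \<and> d < X\<close> Max_ge[OF fin1(1), of d] unfolding a_def by simp
      ultimately show "\<not> asc d" by linarith
    qed
    have "dm \<in> {d. d < L \<and> asc d}" unfolding dm_def using fin1(2) iii(2) by (intro Max_in) auto
    then have m1: "dm < L" "asc dm" by auto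
    have m2: "\<forall>d. dm < d \<and> d < L \<longrightarrow> \<not> asc d"
    proof (intro allI impI)
      fix d assume "dm < d \<and> d < L"
      moreover have "asc d \<Longrightarrow> d \<le> dm" using \<open>dm < d \<and> d < L\<close> Max_ge[OF fin1(2), of d] unfolding dm_def by simp
      ultimately show "\<not> asc d" by linarith
    qed
    obtain d1 where d1: "X \<le> d1" "d1 < L" "asc d1" using iii(2) by blast
    have "d1 \<le> dm" using Max_ge[OF fin1(2), of d1] d1 unfolding dm_def by simp
    then have m0: "X \<le> dm" using d1 by simp
    have NN: "NN X = (\<lambda>i. (Suc dm + i) mod L) ` {..<L - dm + a}"
      using case_iii[OF X(2) a1 a2 m0 m1 m2] set_iii[of a dm] a1 m0 m1 by simp
    have le: "L - dm + a \<le> L" using a1 m0 m1 by linarith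
    have cardN: "card (NN X) = L - dm + a" unfolding NN by (rule intv_card[OF le])
    have "intv L (NN X)" unfolding intv_def using NN le by blast
    moreover have "card (NN X) \<noteq> X" if ev: ?ev
    proof -
      have n1: "X \<noteq> 1"
      proof
        assume "X = 1"
        then have "\<not> asc 0" using ev by simp
        moreover have "a = 0" using a1 \<open>X = 1\<close> by simp
        ultimately show False using a1 by simp
      qed
      have n2: "X \<noteq> L - 1"
      proof
        assume h: "X = L - 1"
        then have "dm = L - 1" using m0 m1 by linarith
        moreover have "\<not> asc (L - 1)" using ev n1 h by simp
        ultimately show False using m1 by simp
      qed
      have e1: "\<not> asc (L - 1)" and e2: "asc (X - 1)" using ev n1 n2 by auto
      have "dm \<noteq> L - 1" using e1 m1 by auto
      then have dmle: "dm \<le> L - 2" using m1 by simp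
      have "X - 1 \<le> a" using Max_ge[OF fin1(1), of "X - 1"] e2 X unfolding a_def by simp
      then have "a = X - 1" using a1 by simp
      then show ?thesis using cardN X m0 dmle by simp
    qed
    ultimately show ?thesis by blast
  qed
  then show "intv L (NN X)" and "?ev \<Longrightarrow> card (NN X) \<noteq> X" by blast+
qed

end


lemma count_half:
  assumes ab: "a \<noteq> b" "a < L" "b < L"
    and Qinv: "\<And>\<sigma>. \<sigma> \<in> perms L \<Longrightarrow> Q (Transposition.transpose a b \<circ> \<sigma>) = Q \<sigma>"
  shows "card {\<sigma>\<in>perms L. Q \<sigma> \<and> inv \<sigma> a < inv \<sigma> b} * 2 = card {\<sigma>\<in>perms L. Q \<sigma>}"
proof -
  let ?\<tau> = "Transposition.transpose a b"
  define A where "A = {\<sigma>\<in>perms L. Q \<sigma> \<and> inv \<sigma> a < inv \<sigma> b}"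
  define B where "B = {\<sigma>\<in>perms L. Q \<sigma> \<and> inv \<sigma> b < inv \<sigma> a}"
  have tp: "?\<tau> permutes {..<L}" using ab by (intro permutes_swap_id) auto
  have invc: "inv (?\<tau> \<circ> \<sigma>) = inv \<sigma> \<circ> ?\<tau>" if "\<sigma> \<in> perms L" for \<sigma>
    using that by (simp add: o_inv_distrib perms_def permutes_bij)
  have inP: "?\<tau> \<circ> \<sigma> \<in> perms L" if "\<sigma> \<in> perms L" for \<sigma>
    using that tp by (simp add: perms_def permutes_compose)
  have invol: "?\<tau> \<circ> (?\<tau> \<circ> \<sigma>) = \<sigma>" for \<sigma> by (simp add: fun_eq_iff)
  have "bij_betw (\<lambda>\<sigma>. ?\<tau> \<circ> \<sigma>) A B"
  proof (rule bij_betw_byWitness[where f' = "\<lambda>\<sigma>. ?\<tau> \<circ> \<sigma>"])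
    show "\<forall>x\<in>A. ?\<tau> \<circ> (?\<tau> \<circ> x) = x" "\<forall>y\<in>B. ?\<tau> \<circ> (?\<tau> \<circ> y) = y" using invol by auto
    show "(\<lambda>\<sigma>. ?\<tau> \<circ> \<sigma>) ` A \<subseteq> B"
    proof
      fix y assume "y \<in> (\<lambda>\<sigma>. ?\<tau> \<circ> \<sigma>) ` A"
      then obtain \<sigma> where s: "\<sigma> \<in> perms L" "Q \<sigma>" "inv \<sigma> a < inv \<sigma> b" "y = ?\<tau> \<circ> \<sigma>" unfolding A_def by blast
      have "inv y = inv \<sigma> \<circ> ?\<tau>" using invc[OF s(1)] s(4) by simp
      then show "y \<in> B" unfolding B_def using s inP[OF s(1)] Qinv[OF s(1)] by simp
    qed
    show "(\<lambda>\<sigma>. ?\<tau> \<circ> \<sigma>) ` B \<subseteq> A"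
    proof
      fix y assume "y \<in> (\<lambda>\<sigma>. ?\<tau> \<circ> \<sigma>) ` B"
      then obtain \<sigma> where s: "\<sigma> \<in> perms L" "Q \<sigma>" "inv \<sigma> b < inv \<sigma> a" "y = ?\<tau> \<circ> \<sigma>" unfolding B_def by blast
      have "inv y = inv \<sigma> \<circ> ?\<tau>" using invc[OF s(1)] s(4) by simp
      then show "y \<in> A" unfolding A_def using s inP[OF s(1)] Qinv[OF s(1)] by simp
    qed
  qed
  then have cAB: "card A = card B" by (rule bij_betw_same_card)
  have neq: "inv \<sigma> a \<noteq> inv \<sigma> b" if "\<sigma> \<in> perms L" for \<sigma>
  proof
    assume "inv \<sigma> a = inv \<sigma> b"
    then have "\<sigma> (inv \<sigma> a) = \<sigma> (inv \<sigma> b)" by simp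
    moreover have "\<sigma> permutes {..<L}" using that by (simp add: perms_def)
    ultimately show False using permutes_inverses(1)[of \<sigma> "{..<L}"] ab(1) by simp
  qed
  have U: "{\<sigma>\<in>perms L. Q \<sigma>} = A \<union> B"
  proof
    show "{\<sigma>\<in>perms L. Q \<sigma>} \<subseteq> A \<union> B"
    proof
      fix \<sigma> assume "\<sigma> \<in> {\<sigma>\<in>perms L. Q \<sigma>}"
      then have s: "\<sigma> \<in> perms L" "Q \<sigma>" by auto
      have "inv \<sigma> a < inv \<sigma> b \<or> inv \<sigma> b < inv \<sigma> a" using neq[OF s(1)] by linarith
      then show "\<sigma> \<in> A \<union> B" unfolding A_def B_def using s by blast
    qed
    show "A \<union> B \<subseteq> {\<sigma>\<in>perms L. Q \<sigma>}" unfolding A_def B_def by blast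
  qed
  have fin: "finite A" "finite B" unfolding A_def B_def using perms_finite by simp_all
  have "A \<inter> B = {}" unfolding A_def B_def by auto
  then have "card {\<sigma>\<in>perms L. Q \<sigma>} = card A + card B" unfolding U using fin by (simp add: card_Un_disjoint)
  then show ?thesis using cAB unfolding A_def by simp
qed

lemma count1:
  assumes "a \<noteq> b" "a < L" "b < L"
  shows "card {\<sigma>\<in>perms L. inv \<sigma> a < inv \<sigma> b} * 2 = fact L"
  using count_half[OF assms, of "\<lambda>_. True"] by (simp add: perms_card)

lemma count2:
  assumes "a \<noteq> b" "a < L" "b < L" "c \<noteq> d" "c < L" "d < L" "c \<notin> {a, b}" "d \<notin> {a, b}"
  shows "card {\<sigma>\<in>perms L. inv \<sigma> c < inv \<sigma> d \<and> inv \<sigma> a < inv \<sigma> b} * 4 = fact L"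
proof -
  have "card {\<sigma>\<in>perms L. inv \<sigma> c < inv \<sigma> d \<and> inv \<sigma> a < inv \<sigma> b} * 2 = card {\<sigma>\<in>perms L. inv \<sigma> c < inv \<sigma> d}"
  proof (rule count_half[OF assms(1-3)])
    fix \<sigma> assume "\<sigma> \<in> perms L"
    then have "inv (Transposition.transpose a b \<circ> \<sigma>) = inv \<sigma> \<circ> Transposition.transpose a b"
      by (simp add: o_inv_distrib perms_def permutes_bij)
    then show "(inv (Transposition.transpose a b \<circ> \<sigma>) c < inv (Transposition.transpose a b \<circ> \<sigma>) d) = (inv \<sigma> c < inv \<sigma> d)"
      using assms(7,8) by simp
  qed
  then show ?thesis using count1[OF assms(4-6)] by linarith
qed


definition evf :: "nat \<Rightarrow> nat \<Rightarrow> (nat \<Rightarrow> nat) \<Rightarrow> bool" where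
  "evf L X \<sigma> = (if X = 1 then \<not> inv \<sigma> 0 < inv \<sigma> 1 else if X = L - 1 then \<not> inv \<sigma> (L - 1) < inv \<sigma> 0
      else \<not> inv \<sigma> (L - 1) < inv \<sigma> 0 \<and> inv \<sigma> (X - 1) < inv \<sigma> X)"

lemma colour_len_Kset: "colour_len L k c = card (Kset L k c)"
  unfolding colour_len_def Kset_def ..

lemma FS:
  assumes L: "2 \<le> L" and X: "1 \<le> X" "X < L" and s: "\<sigma> \<in> perms L"
    and c: "\<forall>q<L. (c q = k \<longleftrightarrow> 1 \<le> q \<and> q \<le> X)"
  shows "intv L (Kset L k (copy_sweep L \<sigma> c))"
    and "evf L X \<sigma> \<Longrightarrow> colour_len L k (copy_sweep L \<sigma> c) \<noteq> X"
proof -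
  interpret frame L \<sigma> using L s by unfold_locales (simp_all add: perms_def)
  have K: "Kset L k (copy_sweep L \<sigma> c) = NN X"
    unfolding Kset_def NN_def select using c piv_lt[OF perm] by auto
  show "intv L (Kset L k (copy_sweep L \<sigma> c))" unfolding K using frame_main(1)[OF X] .
  assume ev: "evf L X \<sigma>"
  have a0: "asc 0 \<longleftrightarrow> inv \<sigma> 0 < inv \<sigma> 1" using L by (simp add: asc_def)
  have aL: "asc (L - 1) \<longleftrightarrow> inv \<sigma> (L - 1) < inv \<sigma> 0" using L by (simp add: asc_def)
  have aX: "asc (X - 1) \<longleftrightarrow> inv \<sigma> (X - 1) < inv \<sigma> X" using X by (simp add: asc_def)
  have "(if X = 1 then \<not> asc 0 else if X = L - 1 then \<not> asc (L - 1) else \<not> asc (L - 1) \<and> asc (X - 1))"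
    using ev unfolding evf_def a0 aL aX .
  then show "colour_len L k (copy_sweep L \<sigma> c) \<noteq> X"
    unfolding colour_len_Kset K by (rule frame_main(2)[OF X])
qed

lemma perm_inv_neq: "\<sigma> \<in> perms L \<Longrightarrow> a \<noteq> b \<Longrightarrow> inv \<sigma> a \<noteq> inv \<sigma> b"
proof
  assume h: "\<sigma> \<in> perms L" "a \<noteq> b" "inv \<sigma> a = inv \<sigma> b"
  then have "\<sigma> (inv \<sigma> a) = \<sigma> (inv \<sigma> b)" by simp
  moreover have "\<sigma> permutes {..<L}" using h by (simp add: perms_def)
  ultimately show False using permutes_inverses(1)[of \<sigma> "{..<L}"] h(2) by simp
qed

lemma count_ev:
  assumes L: "2 \<le> L" and X: "1 \<le> X" "X < L"
  shows "fact L \<le> 4 * card {\<sigma>\<in>perms L. evf L X \<sigma>}"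
proof -
  consider (one) "X = 1" | (top) "X \<noteq> 1" "X = L - 1" | (mid) "X \<noteq> 1" "X \<noteq> L - 1" by blast
  then show ?thesis
  proof cases
    case one
    have "{\<sigma>\<in>perms L. evf L X \<sigma>} = {\<sigma>\<in>perms L. inv \<sigma> 1 < inv \<sigma> 0}"
      using one perm_inv_neq[of _ L 1 0] by (auto simp: evf_def linorder_neq_iff)
    then show ?thesis using count1[of 1 0 L] L by simp
  next
    case top
    have "{\<sigma>\<in>perms L. evf L X \<sigma>} = {\<sigma>\<in>perms L. inv \<sigma> 0 < inv \<sigma> (L - 1)}"
      using top L perm_inv_neq[of _ L 0 "L - 1"] by (auto simp: evf_def linorder_neq_iff)
    then show ?thesis using count1[of 0 "L - 1" L] L by simp
  next
    case mid
    have "{\<sigma>\<in>perms L. evf L X \<sigma>} = {\<sigma>\<in>perms L. inv \<sigma> 0 < inv \<sigma> (L - 1) \<and> inv \<sigma> (X - 1) < inv \<sigma> X}"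
      using mid L perm_inv_neq[of _ L 0 "L - 1"] by (auto simp: evf_def linorder_neq_iff)
    moreover have "card {\<sigma>\<in>perms L. inv \<sigma> 0 < inv \<sigma> (L - 1) \<and> inv \<sigma> (X - 1) < inv \<sigma> X} * 4 = fact L"
      by (rule count2) (use L X mid in auto)
    ultimately show ?thesis by simp
  qed
qed


definition good :: "nat \<Rightarrow> nat \<Rightarrow> (nat \<Rightarrow> nat) \<Rightarrow> bool" where
  "good L k c \<longleftrightarrow> intv L (Kset L k c)"

lemma intv_rot: "intv L K \<Longrightarrow> intv L (rot L m ` K)"
proof -
  assume "intv L K"
  then obtain s n where sn: "n \<le> L" "K = (\<lambda>i. (s + i) mod L) ` {..<n}" unfolding intv_def by blast
  have "rot L m ` K = (\<lambda>i. (s + m + i) mod L) ` {..<n}"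
    unfolding sn image_image
  proof (intro image_cong refl)
    fix i
    have "((s + i) mod L + m) mod L = (s + i + m) mod L" by (rule mod_add_left_eq)
    also have "s + i + m = s + m + i" by simp
    finally show "rot L m ((s + i) mod L) = (s + m + i) mod L" unfolding rot_def .
  qed
  then show ?thesis using sn(1) unfolding intv_def by blast
qed

lemma Kset_transfer:
  assumes s: "\<sigma> \<in> perms L" and m: "m < L"
  shows "Kset L k (copy_sweep L \<sigma> c) = rot L m ` Kset L k (copy_sweep L (rho L m \<circ> \<sigma>) (c \<circ> rot L m))"
proof (intro set_eqI iffI)
  have sp: "\<sigma> permutes {..<L}" using s by (simp add: perms_def)
  fix q assume "q \<in> Kset L k (copy_sweep L \<sigma> c)"
  then have q: "q < L" "copy_sweep L \<sigma> c q = k" by (auto simp: Kset_def)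
  define p where "p = rho L m q"
  have rp: "rot L m p = q" unfolding p_def using rot_rho m q by simp
  have pL: "p < L" unfolding p_def using q by (simp add: rho_def)
  have "copy_sweep L (rho L m \<circ> \<sigma>) (c \<circ> rot L m) p = k" using equiv[OF sp m pL] rp q by simp
  then show "q \<in> rot L m ` Kset L k (copy_sweep L (rho L m \<circ> \<sigma>) (c \<circ> rot L m))"
    using rp pL by (auto simp: Kset_def)
next
  have sp: "\<sigma> permutes {..<L}" using s by (simp add: perms_def)
  fix q assume "q \<in> rot L m ` Kset L k (copy_sweep L (rho L m \<circ> \<sigma>) (c \<circ> rot L m))"
  then obtain p where p: "p < L" "copy_sweep L (rho L m \<circ> \<sigma>) (c \<circ> rot L m) p = k" "q = rot L m p"
    by (auto simp: Kset_def)
  then show "q \<in> Kset L k (copy_sweep L \<sigma> c)"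
    using equiv[OF sp m p(1)] rot_lt[of L m p] by (auto simp: Kset_def)
qed

lemma card_rot: assumes "K \<subseteq> {..<L}" shows "card (rot L m ` K) = card K"
proof (rule card_image, rule inj_onI)
  fix x y assume "x \<in> K" "y \<in> K" "rot L m x = rot L m y"
  then show "x = y" using assms rot_inj[of x m L y] unfolding rot_def by auto
qed

lemma rot_frame:
  assumes K: "Kset L k c = (\<lambda>i. (s + i) mod L) ` {..<n}" and n: "1 \<le> n" "n < L"
  shows "\<forall>q<L. ((c \<circ> rot L ((s + L - 1) mod L)) q = k \<longleftrightarrow> 1 \<le> q \<and> q \<le> n)"
proof (intro allI impI)
  fix q assume qL: "q < L"
  let ?m = "(s + L - 1) mod L"
  have key: "rot L ?m (i + 1) = (s + i) mod L" for i
  proof -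
    have "rot L ?m (i + 1) = (i + 1 + (s + L - 1)) mod L" unfolding rot_def by (rule mod_add_right_eq)
    also have "i + 1 + (s + L - 1) = (s + i) + L" using n by simp
    finally show ?thesis by simp
  qed
  have "(c \<circ> rot L ?m) q = k \<longleftrightarrow> rot L ?m q \<in> Kset L k c" using rot_lt[of L ?m q] n by (simp add: Kset_def)
  also have "\<dots> \<longleftrightarrow> (\<exists>i<n. rot L ?m q = rot L ?m (i + 1))" unfolding K key by auto
  also have "\<dots> \<longleftrightarrow> 1 \<le> q \<and> q \<le> n"
  proof
    assume "\<exists>i<n. rot L ?m q = rot L ?m (i + 1)"
    then obtain i where "i < n" "rot L ?m q = rot L ?m (i + 1)" by blast
    then have "q = i + 1" using rot_inj[of q ?m L "i+1"] qL n unfolding rot_def by simp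
    then show "1 \<le> q \<and> q \<le> n" using \<open>i < n\<close> by simp
  next
    assume "1 \<le> q \<and> q \<le> n"
    then show "\<exists>i<n. rot L ?m q = rot L ?m (i + 1)" by (intro exI[of _ "q - 1"]) auto
  qed
  finally show "(c \<circ> rot L ?m) q = k \<longleftrightarrow> 1 \<le> q \<and> q \<le> n" .
qed

lemma Kset_sub: "Kset L k c \<subseteq> {..<L}" by (auto simp: Kset_def)

lemma rot_setup:
  assumes g: "good L k c" and X: "colour_len L k c \<notin> {0, L}"
  obtains m where "m < L" "2 \<le> L" "1 \<le> colour_len L k c" "colour_len L k c < L"
    "\<forall>q<L. ((c \<circ> rot L m) q = k \<longleftrightarrow> 1 \<le> q \<and> q \<le> colour_len L k c)"
proof -
  obtain s n where sn: "n \<le> L" "Kset L k c = (\<lambda>i. (s + i) mod L) ` {..<n}" using g unfolding good_def intv_def by blast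
  have n: "colour_len L k c = n" unfolding colour_len_Kset sn(2) by (rule intv_card[OF sn(1)])
  have "1 \<le> n" "n < L" using X n sn(1) by auto
  then show ?thesis using that[of "(s + L - 1) mod L"] rot_frame[OF sn(2)] n by simp
qed

lemma rho_comp_perms: "\<sigma> \<in> perms L \<Longrightarrow> m < L \<Longrightarrow> rho L m \<circ> \<sigma> \<in> perms L"
  unfolding perms_def using rho_permutes[of m L] by (simp add: permutes_compose)

lemma S1: assumes g: "good L k c" and s: "\<sigma> \<in> perms L"
  shows "good L k (copy_sweep L \<sigma> c)"
proof (cases "colour_len L k c \<in> {0, L}")
  case True
  have fin: "finite (Kset L k c)" by (rule finite_subset[OF Kset_sub finite_lessThan])
  have sp: "\<sigma> permutes {..<L}" using s by (simp add: perms_def)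
  show ?thesis
  proof (cases "colour_len L k c = 0")
    case True
    then have "Kset L k c = {}" using fin by (simp add: colour_len_Kset)
    then have nk: "\<And>q. q < L \<Longrightarrow> c q \<noteq> k" by (auto simp: Kset_def)
    have "Kset L k (copy_sweep L \<sigma> c) = {}"
    proof -
      have "\<not> (p < L \<and> copy_sweep L \<sigma> c p = k)" for p
        using nk[OF piv_lt[OF sp, of p]] unfolding select by blast
      then show ?thesis unfolding Kset_def by blast
    qed
    then show ?thesis unfolding good_def intv_def by (intro exI[of _ 0]) auto
  next
    case False
    then have "card (Kset L k c) = card {..<L}" using \<open>colour_len L k c \<in> {0, L}\<close> by (simp add: colour_len_Kset)
    then have "Kset L k c = {..<L}" by (intro card_subset_eq[OF finite_lessThan Kset_sub])
    then have nk: "\<And>q. q < L \<Longrightarrow> c q = k" by (auto simp: Kset_def)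
    have "Kset L k (copy_sweep L \<sigma> c) = {..<L}"
    proof -
      have "(p < L \<and> copy_sweep L \<sigma> c p = k) \<longleftrightarrow> p \<in> {..<L}" for p
        using nk[OF piv_lt[OF sp, of p]] unfolding select by auto
      then show ?thesis unfolding Kset_def by blast
    qed
    also have "\<dots> = (\<lambda>i. (0 + i) mod L) ` {..<L}" by auto
    finally show ?thesis unfolding good_def intv_def by blast
  qed
next
  case False
  obtain m where m: "m < L" "2 \<le> L" "1 \<le> colour_len L k c" "colour_len L k c < L"
    "\<forall>q<L. ((c \<circ> rot L m) q = k \<longleftrightarrow> 1 \<le> q \<and> q \<le> colour_len L k c)"
    using rot_setup[OF g False] by blast
  have "intv L (Kset L k (copy_sweep L (rho L m \<circ> \<sigma>) (c \<circ> rot L m)))"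
    by (rule FS(1)[OF m(2,3,4) rho_comp_perms[OF s m(1)] m(5)])
  then show ?thesis unfolding good_def Kset_transfer[OF s m(1)] by (rule intv_rot)
qed

lemma S3: assumes g: "good L k c" and X: "colour_len L k c \<notin> {0, L}"
  shows "fact L \<le> 4 * card {\<sigma>\<in>perms L. colour_len L k (copy_sweep L \<sigma> c) \<noteq> colour_len L k c}"
proof -
  obtain m where m: "m < L" "2 \<le> L" "1 \<le> colour_len L k c" "colour_len L k c < L"
    "\<forall>q<L. ((c \<circ> rot L m) q = k \<longleftrightarrow> 1 \<le> q \<and> q \<le> colour_len L k c)"
    using rot_setup[OF g X] by blast
  let ?X = "colour_len L k c"
  have "card {\<sigma>\<in>perms L. evf L ?X (rho L m \<circ> \<sigma>)} = card {\<sigma>\<in>perms L. evf L ?X \<sigma>}"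
    unfolding card_filter_sum[OF perms_finite]
    by (rule reindex_perms[OF rho_permutes, of m L "\<lambda>\<tau>. if evf L ?X \<tau> then 1 else 0"]) (use m in simp)
  moreover have "{\<sigma>\<in>perms L. evf L ?X (rho L m \<circ> \<sigma>)} \<subseteq> {\<sigma>\<in>perms L. colour_len L k (copy_sweep L \<sigma> c) \<noteq> ?X}"
  proof safe
    fix \<sigma> assume s: "\<sigma> \<in> perms L" and ev: "evf L ?X (rho L m \<circ> \<sigma>)"
    assume eq: "colour_len L k (copy_sweep L \<sigma> c) = ?X"
    have "colour_len L k (copy_sweep L \<sigma> c) = colour_len L k (copy_sweep L (rho L m \<circ> \<sigma>) (c \<circ> rot L m))"
      unfolding colour_len_Kset Kset_transfer[OF s m(1)] by (rule card_rot[OF Kset_sub])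
    moreover have "colour_len L k (copy_sweep L (rho L m \<circ> \<sigma>) (c \<circ> rot L m)) \<noteq> ?X"
      by (rule FS(2)[OF m(2,3,4) rho_comp_perms[OF s m(1)] m(5) ev])
    ultimately show False using eq by simp
  qed
  then have "card {\<sigma>\<in>perms L. evf L ?X (rho L m \<circ> \<sigma>)} \<le> card {\<sigma>\<in>perms L. colour_len L k (copy_sweep L \<sigma> c) \<noteq> ?X}"
    by (rule card_mono[rotated]) (use perms_finite in simp)
  ultimately show ?thesis using count_ev[OF m(2,3,4)] by linarith
qed


lemma lin_interval:
  assumes sub: "K \<subseteq> {..<L}" and top: "L - 1 \<notin> K" and ne: "K \<noteq> {}"
    and uniq: "\<And>p q. p \<in> K \<Longrightarrow> p + 1 \<notin> K \<Longrightarrow> q \<in> K \<Longrightarrow> q + 1 \<notin> K \<Longrightarrow> p = q"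
  shows "intv L K"
proof -
  have fin: "finite K" by (rule finite_subset[OF sub finite_lessThan])
  define a where "a = Min K"
  define b where "b = Max K"
  have bK: "b \<in> K" unfolding b_def using fin ne by (rule Max_in)
  have aK: "a \<in> K" unfolding a_def using fin ne by (rule Min_in)
  have bL: "b < L" using bK sub by auto
  have b1: "b + 1 \<notin> K" using Max_ge[OF fin] unfolding b_def by fastforce
  have fill: "r \<in> K" if q: "q \<in> K" "q \<le> r" "r \<le> b" for q r
  proof (rule ccontr)
    assume "r \<notin> K"
    define r0 where "r0 = (LEAST r. q \<le> r \<and> r \<notin> K)"
    have r0: "q \<le> r0 \<and> r0 \<notin> K" unfolding r0_def by (rule LeastI[of _ r]) (use q \<open>r \<notin> K\<close> in simp)
    have r0r: "r0 \<le> r" unfolding r0_def by (rule Least_le) (use q \<open>r \<notin> K\<close> in simp)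
    have "r0 \<noteq> q" using r0 q by auto
    then have "q \<le> r0 - 1" "r0 - 1 < r0" using r0 by auto
    then have "r0 - 1 \<in> K" using not_less_Least[of "r0 - 1" "\<lambda>r. q \<le> r \<and> r \<notin> K"] unfolding r0_def[symmetric] by auto
    moreover have "r0 - 1 + 1 \<notin> K" using r0 \<open>r0 \<noteq> q\<close> by simp
    ultimately have "r0 - 1 = b" using uniq bK b1 by blast
    then show False using r0r q(3) \<open>r0 \<noteq> q\<close> r0 by linarith
  qed
  have "K = {a..b}"
  proof
    show "K \<subseteq> {a..b}" using Min_le[OF fin] Max_ge[OF fin] unfolding a_def b_def by auto
    show "{a..b} \<subseteq> K" using fill[OF aK] by auto
  qed
  also have "\<dots> = (\<lambda>i. (a + i) mod L) ` {..<Suc b - a}"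
  proof (intro set_eqI iffI)
    fix x assume "x \<in> {a..b}"
    then have "x = (a + (x - a)) mod L" "x - a < Suc b - a" using bL by auto
    then show "x \<in> (\<lambda>i. (a + i) mod L) ` {..<Suc b - a}" by blast
  next
    fix x assume "x \<in> (\<lambda>i. (a + i) mod L) ` {..<Suc b - a}"
    then obtain i where "i < Suc b - a" "x = (a + i) mod L" by blast
    moreover have "a \<le> b" using aK Max_ge[OF fin] unfolding b_def a_def by auto
    ultimately show "x \<in> {a..b}" using bL by auto
  qed
  finally show ?thesis unfolding intv_def using bL aK sub
    by (intro exI[of _ a] exI[of _ "Suc b - a"]) auto
qed

lemma onex:
  assumes sub: "K \<subseteq> {..<L}"
    and uniq: "\<And>p q. p < L \<Longrightarrow> q < L \<Longrightarrow> p \<in> K \<Longrightarrow> (p + 1) mod L \<notin> K \<Longrightarrow> q \<in> K \<Longrightarrow> (q + 1) mod L \<notin> K \<Longrightarrow> p = q"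
  shows "intv L K"
proof (cases "K = {..<L}")
  case True
  then have "K = (\<lambda>i. (0 + i) mod L) ` {..<L}" by auto
  then show ?thesis unfolding intv_def by blast
next
  case False
  then obtain r0 where r0: "r0 < L" "r0 \<notin> K" using sub by auto
  show ?thesis
  proof (cases "K = {}")
    case True
    then show ?thesis unfolding intv_def by (intro exI[of _ 0] exI[of _ 0]) auto
  next
    case ne: False
    define m where "m = (r0 + 1) mod L"
    have mL: "m < L" unfolding m_def using r0 by simp
    define K' where "K' = {p. p < L \<and> rot L m p \<in> K}"
    have KK: "K = rot L m ` K'"
    proof (intro set_eqI iffI)
      fix q assume "q \<in> K"
      then have qL: "q < L" using sub by auto
      then have "rot L m (rho L m q) = q" "rho L m q < L" using rot_rho[of m L q] mL by (auto simp: rho_def)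
      then show "q \<in> rot L m ` K'" unfolding K'_def using \<open>q \<in> K\<close> by (metis (mono_tags, lifting) image_eqI mem_Collect_eq)
    qed (auto simp: K'_def)
    have top: "rot L m (L - 1) = r0"
    proof -
      have "rot L m (L - 1) = (L - 1 + (r0 + 1)) mod L" unfolding rot_def m_def by (rule mod_add_right_eq)
      also have "L - 1 + (r0 + 1) = r0 + L" using r0 by simp
      finally show ?thesis using r0 by simp
    qed
    have "intv L K'"
    proof (rule lin_interval)
      show "K' \<subseteq> {..<L}" by (auto simp: K'_def)
      show "L - 1 \<notin> K'" using top r0 by (auto simp: K'_def)
      show "K' \<noteq> {}" using ne KK by auto
      fix p q assume p: "p \<in> K'" "p + 1 \<notin> K'" and q: "q \<in> K'" "q + 1 \<notin> K'"
      have pL: "p + 1 < L" using p top r0 by (cases "p + 1 = L") (auto simp: K'_def)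
      have qL: "q + 1 < L" using q top r0 by (cases "q + 1 = L") (auto simp: K'_def)
      have "(rot L m p + 1) mod L \<notin> K" using p pL rot_next[of L m p] by (auto simp: K'_def)
      moreover have "(rot L m q + 1) mod L \<notin> K" using q qL rot_next[of L m q] by (auto simp: K'_def)
      ultimately have "rot L m p = rot L m q"
        using uniq[of "rot L m p" "rot L m q"] p q r0 by (auto simp: K'_def rot_def)
      then show "p = q" using rot_inj[of p m L q] pL qL unfolding rot_def by simp
    qed
    then show ?thesis unfolding KK by (rule intv_rot)
  qed
qed

lemma Init: assumes "run_colouring L G c0" shows "good L k c0"
  unfolding good_def
proof (rule onex[OF Kset_sub])
  fix p q assume pq: "p < L" "q < L" and p: "p \<in> Kset L k c0" "(p + 1) mod L \<notin> Kset L k c0"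
    and q: "q \<in> Kset L k c0" "(q + 1) mod L \<notin> Kset L k c0"
  show "p = q"
  proof (cases "L = 1")
    case True then show ?thesis using pq by simp
  next
    case False
    then have L2: "2 \<le> L" using pq by simp
    have cr: "c0 x = c0 y \<longleftrightarrow> same_run L G x y" if "x < L" "y < L" for x y
      using assms that unfolding run_colouring_def by blast
    have nr: "G ((x + 1) mod L) \<noteq> G x" if "x < L" "x \<in> Kset L k c0" "(x + 1) mod L \<notin> Kset L k c0" for x
    proof
      assume eq: "G ((x + 1) mod L) = G x"
      have "same_run L G x ((x + 1) mod L)" unfolding same_run_def
      proof (rule disjI1, intro exI[of _ 1] conjI allI impI)
        show "1 < L" using L2 by simp
        show "(x + 1) mod L = (x + 1) mod L" ..
        fix j :: nat assume "j \<le> 1"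
        then consider "j = 0" | "j = 1" by linarith
        then show "G ((x + j) mod L) = G x" using eq that(1) by cases auto
      qed
      then have "c0 x = c0 ((x + 1) mod L)" using cr[of x "(x + 1) mod L"] that(1) L2 by simp
      then show False using that by (simp add: Kset_def)
    qed
    have "c0 p = c0 q" using p q by (simp add: Kset_def)
    then have sr: "same_run L G p q" using cr pq by blast
    have np: "G ((p + 1) mod L) \<noteq> G p" using nr pq p by blast
    have nq: "G ((q + 1) mod L) \<noteq> G q" using nr pq q by blast
    from sr show ?thesis unfolding same_run_def
    proof (elim disjE exE conjE)
      fix j assume j: "j < L" "(p + j) mod L = q" "\<forall>i\<le>j. G ((p + i) mod L) = G p"
      show "p = q"
      proof (cases "j = 0")
        case True then show ?thesis using j pq by simp
      next
        case False then show ?thesis using j(3) np by (metis One_nat_def Suc_leI not_gr_zero)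
      qed
    next
      fix j assume j: "j < L" "(q + j) mod L = p" "\<forall>i\<le>j. G ((q + i) mod L) = G q"
      show "p = q"
      proof (cases "j = 0")
        case True then show ?thesis using j pq by simp
      next
        case False then show ?thesis using j(3) nq by (metis One_nat_def Suc_leI not_gr_zero)
      qed
    qed
  qed
qed


lemma S2: "(\<Sum>\<sigma>\<in>perms L. real (colour_len L k (copy_sweep L \<sigma> c))) = fact L * real (colour_len L k c)"
proof -
  have "real (\<Sum>\<sigma>\<in>perms L. colour_len L k (copy_sweep L \<sigma> c)) = real (fact L * colour_len L k c)"
    by (simp only: S2nat)
  then show ?thesis by (simp add: of_nat_sum)
qed

lemma colour_len_le: "colour_len L k c \<le> L"
  unfolding colour_len_def by (rule order_trans[OF card_mono[of "{..<L}"]]) auto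

definition fpot :: "nat \<Rightarrow> nat \<Rightarrow> real" where
  "fpot L x = real x * (real L - real x)"

lemma drift:
  assumes "good L k c" "colour_len L k c \<notin> {0, L}"
  shows "(\<Sum>\<sigma>\<in>perms L. fpot L (colour_len L k (copy_sweep L \<sigma> c))) \<le> fact L * (fpot L (colour_len L k c) - 1/4)"
proof -
  define X where "X = real (colour_len L k c)"
  define Y where "Y = (\<lambda>\<sigma>. real (colour_len L k (copy_sweep L \<sigma> c)))"
  define A where "A = {\<sigma>\<in>perms L. colour_len L k (copy_sweep L \<sigma> c) \<noteq> colour_len L k c}"
  have fin: "finite (perms L)" by (rule perms_finite)
  have sumY: "(\<Sum>\<sigma>\<in>perms L. Y \<sigma>) = fact L * X" unfolding Y_def X_def by (rule S2)
  have "fact L \<le> 4 * card A" using S3[OF assms] unfolding A_def .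
  then have "real (fact L) \<le> real (4 * card A)" by (simp only: of_nat_le_iff)
  then have cardA: "fact L \<le> 4 * real (card A)" by simp
  have "real (card A) = (\<Sum>\<sigma>\<in>A. 1)" by simp
  also have "\<dots> \<le> (\<Sum>\<sigma>\<in>A. (Y \<sigma> - X)^2)"
  proof (rule sum_mono)
    fix \<sigma> assume "\<sigma> \<in> A"
    then have "colour_len L k (copy_sweep L \<sigma> c) \<noteq> colour_len L k c" by (simp add: A_def)
    then have "\<bar>Y \<sigma> - X\<bar> \<ge> 1" unfolding Y_def X_def by linarith
    then show "1 \<le> (Y \<sigma> - X)^2"
      by (metis abs_le_square_iff abs_one one_power2)
  qed
  also have "\<dots> \<le> (\<Sum>\<sigma>\<in>perms L. (Y \<sigma> - X)^2)"
    by (rule sum_mono2[OF fin]) (auto simp: A_def)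
  also have "\<dots> = (\<Sum>\<sigma>\<in>perms L. Y \<sigma>^2 - 2 * X * Y \<sigma> + X^2)"
    by (intro sum.cong refl) (simp add: power2_eq_square algebra_simps)
  also have "\<dots> = (\<Sum>\<sigma>\<in>perms L. Y \<sigma>^2) - 2 * X * (\<Sum>\<sigma>\<in>perms L. Y \<sigma>) + fact L * X^2"
    by (simp only: sum.distrib sum_subtractf sum_distrib_left[symmetric] sum_constant perms_card) simp
  also have "\<dots> = (\<Sum>\<sigma>\<in>perms L. Y \<sigma>^2) - fact L * X^2"
    unfolding sumY by (simp add: power2_eq_square)
  finally have v: "real (card A) \<le> (\<Sum>\<sigma>\<in>perms L. Y \<sigma>^2) - fact L * X^2" .
  have "(\<Sum>\<sigma>\<in>perms L. fpot L (colour_len L k (copy_sweep L \<sigma> c))) = (\<Sum>\<sigma>\<in>perms L. real L * Y \<sigma> - Y \<sigma>^2)"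
    unfolding fpot_def Y_def by (intro sum.cong refl) (simp add: power2_eq_square algebra_simps)
  also have "\<dots> = real L * (fact L * X) - (\<Sum>\<sigma>\<in>perms L. Y \<sigma>^2)"
    by (simp only: sum_subtractf sum_distrib_left[symmetric] sumY)
  also have "\<dots> \<le> real L * (fact L * X) - fact L * X^2 - fact L / 4"
    using v cardA by linarith
  also have "\<dots> = fact L * (fpot L (colour_len L k c) - 1/4)"
    unfolding fpot_def X_def by (simp add: power2_eq_square algebra_simps)
  finally show ?thesis .
qed

lemma fpot_nonneg: "x \<le> L \<Longrightarrow> 0 \<le> fpot L x"
  unfolding fpot_def by simp

lemma fpot_le: "4 * fpot L x \<le> real L ^ 2"
proof -
  have "0 \<le> (real L - 2 * real x)^2" by simp
  then show ?thesis unfolding fpot_def by (simp add: power2_eq_square algebra_simps)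
qed

lemma Pr_sum_bound:
  "good L k c \<Longrightarrow> (\<Sum>i<n. Pr L k (Suc i) c) \<le> 4 * fpot L (colour_len L k c)"
proof (induction n arbitrary: c)
  case 0
  then show ?case using fpot_nonneg[OF colour_len_le] by simp
next
  case (Suc n)
  show ?case
  proof (cases "colour_len L k c \<in> {0, L}")
    case True
    then have "Pr L k (Suc i) c = 0" for i by (simp add: Pr_Suc)
    then show ?thesis using fpot_nonneg[OF colour_len_le] by simp
  next
    case False
    let ?c = "\<lambda>\<sigma>. copy_sweep L \<sigma> c"
    have F: "fact L > (0::real)" by simp
    have "(\<Sum>i<Suc n. Pr L k (Suc i) c) = Pr L k 1 c + (\<Sum>i<n. Pr L k (Suc (Suc i)) c)"
      by (subst sum.lessThan_Suc_shift) simp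
    also have "Pr L k 1 c = 1"
      using False by (simp add: Pr_Suc Pr_0 perms_card)
    also have "(\<Sum>i<n. Pr L k (Suc (Suc i)) c) = (\<Sum>i<n. (\<Sum>\<sigma>\<in>perms L. Pr L k (Suc i) (?c \<sigma>)) / fact L)"
      using False by (simp add: Pr_Suc[of L k "Suc _"])
    also have "\<dots> = (\<Sum>\<sigma>\<in>perms L. (\<Sum>i<n. Pr L k (Suc i) (?c \<sigma>))) / fact L"
      by (simp add: sum_divide_distrib[symmetric] sum.swap[of _ "{..<n}"])
    also have "\<dots> \<le> (\<Sum>\<sigma>\<in>perms L. 4 * fpot L (colour_len L k (?c \<sigma>))) / fact L"
      by (intro divide_right_mono sum_mono Suc.IH S1[OF Suc.prems]) auto
    also have "\<dots> \<le> 4 * (fpot L (colour_len L k c) - 1/4)"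
      using drift[OF Suc.prems False] F by (simp add: sum_distrib_left[symmetric] field_simps)
    finally show ?thesis by simp
  qed
qed

lemma Pr_bound_n:
  assumes "good L k c" "n > 0"
  shows "Pr L k n c \<le> real L ^ 2 / n"
proof -
  have "real n * Pr L k n c = (\<Sum>i<n. Pr L k n c)" by simp
  also have "\<dots> \<le> (\<Sum>i<n. Pr L k (Suc i) c)"
    by (intro sum_mono Pr_antimono) auto
  also have "\<dots> \<le> real L ^ 2"
    using Pr_sum_bound[OF assms(1), of n] fpot_le[of L "colour_len L k c"] by linarith
  finally show ?thesis using assms(2) by (simp add: field_simps)
qed

lemma Pr_chain:
  assumes B: "\<And>c. good L k c \<Longrightarrow> Pr L k n c \<le> B" and "B \<ge> 0"
  shows "good L k c \<Longrightarrow> Pr L k (m + n) c \<le> B * Pr L k m c"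
proof (induction m arbitrary: c)
  case 0
  then show ?case using B by (simp add: Pr_0)
next
  case (Suc m)
  show ?case
  proof (cases "colour_len L k c \<in> {0, L}")
    case True
    then show ?thesis by (simp add: Pr_Suc)
  next
    case False
    have "(\<Sum>\<sigma>\<in>perms L. Pr L k (m + n) (copy_sweep L \<sigma> c)) \<le> (\<Sum>\<sigma>\<in>perms L. B * Pr L k m (copy_sweep L \<sigma> c))"
      by (intro sum_mono Suc.IH S1[OF Suc.prems])
    then show ?thesis using False
      by (simp add: Pr_Suc sum_distrib_left[symmetric] divide_right_mono)
  qed
qed

lemma Pr_power:
  assumes "good L k c" "L \<ge> 1"
  shows "Pr L k (a * (4 * L^2)) c \<le> (1/2) ^ a"
proof -
  have B: "Pr L k (4 * L^2) d \<le> 1/2" if "good L k d" for d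
  proof -
    have "Pr L k (4 * L^2) d \<le> real L ^ 2 / real (4 * L^2)"
      using Pr_bound_n[OF that, of "4*L^2"] assms(2) by simp
    also have "\<dots> = 1/4" using assms(2) by simp
    finally show ?thesis by simp
  qed
  show ?thesis
  proof (induction a)
    case 0 then show ?case by (simp add: Pr_0)
  next
    case (Suc a)
    have "Pr L k (Suc a * (4 * L^2)) c = Pr L k (a * (4 * L^2) + 4 * L^2) c" by (simp add: algebra_simps)
    also have "\<dots> \<le> 1/2 * Pr L k (a * (4 * L^2)) c"
      by (rule Pr_chain[OF B _ assms(1)]) auto
    also have "\<dots> \<le> (1/2) ^ Suc a" using Suc by simp
    finally show ?case .
  qed
qed


theorem lemma4:
  fixes L a k :: nat and G :: "nat \<Rightarrow> bool" and c0 :: "nat \<Rightarrow> nat"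
  assumes "L \<ge> 1"
    and "run_colouring L G c0"
    and "\<exists>p<L. c0 p = k"
    and "a \<ge> 1"
  shows "measure_pmf.prob (copy_traj L c0 (4 * a * L^2))
           {xs. \<forall>i<4 * a * L^2. colour_len L k (xs ! i) \<notin> {0, L}}
         \<le> (1/2) ^ a"
proof -
  have eq: "4 * a * L^2 = a * (4 * L^2)" by simp
  show ?thesis using Pr_power[OF Init[OF assms(2), of k] assms(1), where a=a] unfolding Pr_def eq .
qed

end
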